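(* Let $k\geq1$ and let $I_1,\ldots,I_n$ be a partition of $\{1,\ldots,k\}$. Let $a=(a_1,\ldots,a_k)\in\mathbb{R}^k$ and define $b=(b_1,\ldots,b_n)\in\mathbb{R}^n$ by $b_i=\sum_{j\in I_i}a_j$. If $a\in\Delta_k$ then $b\in\Delta_n$.
   Context: For $m\geq1$, $\Delta_m$ is the set of $(a_1,\ldots,a_m)\in[0,1]^m$ with $\sum_{j=1}^ma_j\leq1$ and $a_i+\sum_{j=1}^ma_j\geq1$ for every $i\in\{1,\ldots,m\}$. *)

theory Defs
  imports Main "HOL.Real"
begin

definition Delta :: "nat \<Rightarrow> (nat \<Rightarrow> real) set" where
  "Delta m = {a. (\<forall>i\<in>{1..m}. 0 \<le> a i \<and> a i \<le> 1)
                 \<and> (\<Sum>j=1..m. a j) \<le> 1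
                 \<and> (\<forall>i\<in>{1..m}. a i + (\<Sum>j=1..m. a j) \<ge> 1)}"

end

theory Submission
  imports Defs
begin

theorem lemma1p3:
  fixes k n :: nat and I :: "nat \<Rightarrow> nat set" and a :: "nat \<Rightarrow> real"
  assumes "k \<ge> 1"
    and "\<forall>i\<in>{1..n}. I i \<noteq> {}"
    and "\<forall>i\<in>{1..n}. \<forall>j\<in>{1..n}. i \<noteq> j \<longrightarrow> I i \<inter> I j = {}"
    and "(\<Union>i\<in>{1..n}. I i) = {1..k}"
    and "a \<in> Delta k"
  shows "(\<lambda>i. \<Sum>j\<in>I i. a j) \<in> Delta n"
proof -
  let ?S = "\<Sum>j=1..k. a j"
  have a0: "\<And>j. j \<in> {1..k} \<Longrightarrow> 0 \<le> a j" and a1: "?S \<le> 1"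
    and a2: "\<And>j. j \<in> {1..k} \<Longrightarrow> a j + ?S \<ge> 1"
    using assms(5) unfolding Delta_def by auto
  have sub: "\<And>i. i \<in> {1..n} \<Longrightarrow> I i \<subseteq> {1..k}" using assms(4) by blast
  have fin: "\<And>i. i \<in> {1..n} \<Longrightarrow> finite (I i)" using sub finite_subset by blast
  have tot: "(\<Sum>i=1..n. \<Sum>j\<in>I i. a j) = ?S"
  proof -
    have "(\<Sum>i=1..n. \<Sum>j\<in>I i. a j) = (\<Sum>j\<in>(\<Union>i\<in>{1..n}. I i). a j)"
      by (rule sum.UNION_disjoint[symmetric]) (use fin assms(3) in auto)
    then show ?thesis using assms(4) by simp
  qed
  have le: "\<And>i. i \<in> {1..n} \<Longrightarrow> (\<Sum>j\<in>I i. a j) \<le> ?S"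
    by (rule sum_mono2) (use sub a0 in auto)
  have ge0: "\<And>i. i \<in> {1..n} \<Longrightarrow> 0 \<le> (\<Sum>j\<in>I i. a j)"
    using sub a0 by (meson subsetD sum_nonneg)
  have ge: "\<And>i. i \<in> {1..n} \<Longrightarrow> (\<Sum>j\<in>I i. a j) + ?S \<ge> 1"
  proof -
    fix i assume i: "i \<in> {1..n}"
    then obtain j where j: "j \<in> I i" using assms(2) by blast
    have nn: "\<And>x. x \<in> I i \<Longrightarrow> 0 \<le> a x" using i sub a0 by blast
    have "a j \<le> (\<Sum>j\<in>I i. a j)"
      by (rule member_le_sum) (use j i nn fin in auto)
    moreover have "a j + ?S \<ge> 1" using a2 j sub i by blast
    ultimately show "(\<Sum>j\<in>I i. a j) + ?S \<ge> 1" by linarith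
  qed
  have le1: "\<And>i. i \<in> {1..n} \<Longrightarrow> (\<Sum>j\<in>I i. a j) \<le> 1"
    using le a1 by fastforce
  show ?thesis unfolding Delta_def using tot le1 ge0 ge a1 by auto
qed

end
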